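(* For $m,N\in\mathbb N^+$, let $\mathcal S(m,N)$ be the set of solutions $k\in(0,\pi)$ of $$-\frac{1}{2^{m+1}-1}\tan\Big(\frac k2\Big)=\tan(Nk),$$ and let $\mathcal S(m)=\bigcup_{N\in\mathbb N^+}\mathcal S(m,N)$. Then: (1) for $m_1\ne m_2$, $\mathcal S(m_1)\cap\mathcal S(m_2)=\mathcal S(m_1)\cap\pi\mathbb Q=\mathcal S(m_2)\cap\pi\mathbb Q=\emptyset$; (2) for every $m$ and every $N_1\ne N_2$, $\mathcal S(m,N_1)\cap\mathcal S(m,N_2)=\emptyset$. *)

theory Defs
  imports Complex_Main
begin

text \<open>S(m,N): solutions k in (0,pi) of -(1/(2^(m+1)-1)) tan(k/2) = tan(N k).
  The guard cos(N k) ~= 0 records that tan(N k) must be defined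
  (Isabelle's tan is total, with value 0 at poles).\<close>
definition Ssol :: "nat \<Rightarrow> nat \<Rightarrow> real set" where
  "Ssol m N = {k. 0 < k \<and> k < pi \<and> cos (real N * k) \<noteq> 0 \<and>
      - (1 / (2 ^ (m + 1) - 1)) * tan (k / 2) = tan (real N * k)}"

definition Sall :: "nat \<Rightarrow> real set" where
  "Sall m = (\<Union>N\<in>{N. N \<ge> 1}. Ssol m N)"

definition piRat :: "real set" where
  "piRat = {pi * of_rat q | q. True}"

end

theory Submission
  imports Defs "Jordan_Normal_Form.Char_Poly" "HOL-Computational_Algebra.Polynomial"
begin


inductive_set zsp :: "complex set \<Rightarrow> complex set" for G where
  zsp_0: "0 \<in> zsp G"
| zsp_g: "g \<in> G \<Longrightarrow> g \<in> zsp G"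
| zsp_add: "a \<in> zsp G \<Longrightarrow> b \<in> zsp G \<Longrightarrow> a + b \<in> zsp G"
| zsp_neg: "a \<in> zsp G \<Longrightarrow> - a \<in> zsp G"

lemma zsp_diff: "a \<in> zsp G \<Longrightarrow> b \<in> zsp G \<Longrightarrow> a - b \<in> zsp G"
  using zsp_add[OF _ zsp_neg] by (metis diff_conv_add_uminus)

lemma zsp_nat_mult: "a \<in> zsp G \<Longrightarrow> of_nat k * a \<in> zsp G"
  by (induction k) (auto simp: algebra_simps intro: zsp.intros)

lemma zsp_int_mult: assumes "a \<in> zsp G" shows "of_int k * a \<in> zsp G"
proof (cases "k \<ge> 0")
  case True
  then obtain n where "k = int n" by (metis nonneg_eq_int)
  then show ?thesis using zsp_nat_mult[of a G n] \<open>a \<in> zsp G\<close> by simp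
next
  case False
  then obtain n where "k = - int n" by (intro that[of "nat (-k)"]) simp
  then show ?thesis using zsp_neg[OF zsp_nat_mult[of a G n]] \<open>a \<in> zsp G\<close> by simp
qed

lemma zsp_sum: "(\<And>i. i \<in> I \<Longrightarrow> f i \<in> zsp G) \<Longrightarrow> sum f I \<in> zsp G"
  by (induction I rule: infinite_finite_induct) (auto intro: zsp.intros)

lemma zsp_lin:
  assumes "finite G" "x \<in> zsp G"
  shows "\<exists>c::complex \<Rightarrow> int. x = (\<Sum>g\<in>G. of_int (c g) * g)"
  using assms(2)
proof induction
  case zsp_0
  show ?case by (rule exI[of _ "\<lambda>_. 0"]) simp
next
  case (zsp_g g)
  show ?case
  proof (rule exI[of _ "\<lambda>h. if h = g then 1 else 0"])
    have "(\<Sum>h\<in>G. of_int (if h = g then 1 else 0) * h) = (\<Sum>h\<in>G. if h = g then g else 0)"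
      by (rule sum.cong) auto
    also have "\<dots> = g" using zsp_g assms(1) by (simp add: sum.delta')
    finally show "g = (\<Sum>h\<in>G. of_int (if h = g then 1 else 0) * h)" by simp
  qed
next
  case (zsp_add a b)
  then obtain c d where "a = (\<Sum>g\<in>G. of_int (c g) * g)" "b = (\<Sum>g\<in>G. of_int (d g) * g)" by blast
  then show ?case
    by (intro exI[of _ "\<lambda>g. c g + d g"]) (simp add: sum.distrib algebra_simps)
next
  case (zsp_neg a)
  then obtain c where "a = (\<Sum>g\<in>G. of_int (c g) * g)" by blast
  then show ?case
    by (intro exI[of _ "\<lambda>g. - c g"]) (simp add: sum_negf)
qed

lemma zsp_mono_mult:
  assumes "\<And>g. g \<in> G \<Longrightarrow> y * g \<in> zsp G" "x \<in> zsp G"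
  shows "y * x \<in> zsp G"
  using assms(2)
proof induction
  case (zsp_add a b) then show ?case using zsp.zsp_add[of "y*a" G "y*b"] by (simp add: distrib_left)
next
  case (zsp_neg a) then show ?case using zsp.zsp_neg[of "y*a" G] by simp
qed (auto simp: assms(1) intro: zsp.intros)

definition stab :: "complex \<Rightarrow> complex set \<Rightarrow> bool" where
  "stab y G \<longleftrightarrow> finite G \<and> (\<exists>g\<in>G. g \<noteq> 0) \<and> (\<forall>g\<in>G. y * g \<in> zsp G)"

lemma stab_imp_algebraic_int:
  assumes "stab y G"
  shows "algebraic_int y"
proof -
  from assms have fin: "finite G" and nz: "\<exists>g\<in>G. g \<noteq> 0" and cl: "\<forall>g\<in>G. y * g \<in> zsp G"
    unfolding stab_def by auto
  obtain L where L: "distinct L" "set L = G" using finite_distinct_list[OF fin] by blast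
  define n where "n = length L"
  have "\<forall>j. \<exists>c::complex \<Rightarrow> int. j < n \<longrightarrow> y * L ! j = (\<Sum>g\<in>G. of_int (c g) * g)"
    using cl zsp_lin[OF fin] L unfolding n_def by (metis nth_mem)
  then obtain C where C: "\<And>j. j < n \<Longrightarrow> y * L ! j = (\<Sum>g\<in>G. of_int (C j g) * g)" by metis
  have sumL: "(\<Sum>g\<in>G. f g) = (\<Sum>k<n. f (L ! k))" for f :: "complex \<Rightarrow> complex"
    unfolding L(2)[symmetric] n_def
    by (simp add: sum.distinct_set_conv_list[OF L(1)] sum_list_sum_nth atLeast0LessThan)
  define A :: "int mat" where "A = mat n n (\<lambda>(j,k). C j (L ! k))"
  define Ac :: "complex mat" where "Ac = map_mat of_int A"
  define v :: "complex vec" where "v = vec n (\<lambda>k. L ! k)"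
  have A: "A \<in> carrier_mat n n" unfolding A_def by simp
  have Ac: "Ac \<in> carrier_mat n n" unfolding Ac_def using A by simp
  have v: "v \<in> carrier_vec n" unfolding v_def by simp
  have vnz: "v \<noteq> 0\<^sub>v n"
  proof
    assume "v = 0\<^sub>v n"
    from nz L obtain k where "k < n" "L ! k \<noteq> 0" unfolding n_def by (metis in_set_conv_nth)
    with \<open>v = 0\<^sub>v n\<close> show False unfolding v_def by (metis index_vec index_zero_vec(1))
  qed
  have "Ac *\<^sub>v v = y \<cdot>\<^sub>v v"
  proof (rule eq_vecI)
    fix j assume "j < dim_vec (y \<cdot>\<^sub>v v)"
    hence j: "j < n" using v by simp
    have "(Ac *\<^sub>v v) $ j = (\<Sum>k<n. of_int (C j (L ! k)) * L ! k)"
      using j Ac unfolding Ac_def A_def v_def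
      by (simp add: mult_mat_vec_def scalar_prod_def atLeast0LessThan)
    also have "\<dots> = y * L ! j" using C[OF j] sumL by simp
    finally show "(Ac *\<^sub>v v) $ j = (y \<cdot>\<^sub>v v) $ j" using j v unfolding v_def by simp
  qed (use v Ac in simp)
  hence "eigenvalue Ac y"
    unfolding eigenvalue_def eigenvector_def using v vnz Ac by auto
  hence "poly (char_poly Ac) y = 0" using eigenvalue_root_char_poly[OF Ac] by simp
  moreover have "char_poly Ac = of_int_poly (char_poly A)"
    using of_int_hom.char_poly_hom[OF A] unfolding Ac_def by simp
  ultimately have "poly (of_int_poly (char_poly A)) y = 0" by simp
  moreover have "lead_coeff (char_poly A) = 1"
    using degree_monic_char_poly[OF A] by simp
  ultimately show ?thesis unfolding algebraic_int_altdef_ipoly by blast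
qed


lemma algebraic_int_stab:
  assumes "algebraic_int y"
  shows "\<exists>G. stab y G"
proof -
  obtain p where p: "poly (of_int_poly p) y = 0" "lead_coeff p = 1"
    using assms unfolding algebraic_int_altdef_ipoly by blast
  define d where "d = degree p"
  have d0: "d > 0"
  proof (rule ccontr)
    assume "\<not> d > 0"
    hence "degree p = 0" unfolding d_def by simp
    then obtain a where a: "p = [:a:]" by (rule degree_eq_zeroE)
    hence "a = 1" using p(2) by simp
    hence "p = 1" using a by (simp add: one_pCons)
    thus False using p(1) by simp
  qed
  define G where "G = (\<lambda>i. y ^ i) ` {..<d}"
  have fin: "finite G" unfolding G_def by simp
  have oneG: "1 \<in> G" unfolding G_def using d0 by (auto intro: image_eqI[of _ _ 0])
  have pe: "poly (of_int_poly p) y = (\<Sum>i\<le>d. of_int (coeff p i) * y ^ i)"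
    unfolding poly_altdef d_def by (simp add: coeff_map_poly degree_map_poly)
  have "(\<Sum>i\<le>d. of_int (coeff p i) * y ^ i) = y ^ d + (\<Sum>i<d. of_int (coeff p i) * y ^ i)"
    using p(2) unfolding d_def by (simp add: lessThan_Suc_atMost[symmetric])
  hence yd: "y ^ d = - (\<Sum>i<d. of_int (coeff p i) * y ^ i)"
    using p(1) pe by (simp add: eq_neg_iff_add_eq_0)
  have "y * g \<in> zsp G" if "g \<in> G" for g
  proof -
    from that obtain i where i: "i < d" "g = y ^ i" unfolding G_def by auto
    show ?thesis
    proof (cases "Suc i < d")
      case True
      hence "y * g \<in> G" using i unfolding G_def by (auto intro!: image_eqI[of _ _ "Suc i"])
      thus ?thesis by (rule zsp_g)
    next
      case False
      hence "Suc i = d" using i by simp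
      hence "y * g = y ^ d" using i by (metis power_Suc)
      also have "\<dots> = - (\<Sum>i<d. of_int (coeff p i) * y ^ i)" by (rule yd)
      also have "\<dots> \<in> zsp G"
        by (intro zsp_neg zsp_sum zsp_int_mult zsp_g) (auto simp: G_def)
      finally show ?thesis .
    qed
  qed
  hence "stab y G" unfolding stab_def using fin oneG by (metis one_neq_zero)
  thus ?thesis by blast
qed

definition pset :: "complex set \<Rightarrow> complex set \<Rightarrow> complex set" where
  "pset G H = (\<lambda>(g,h). g * h) ` (G \<times> H)"

lemma zsp_mult_right: "a \<in> zsp G \<Longrightarrow> h \<in> H \<Longrightarrow> a * h \<in> zsp (pset G H)"
proof (induction rule: zsp.induct)
  case (zsp_g g) thus ?case by (intro zsp.zsp_g) (auto simp: pset_def)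
next
  case (zsp_add a b) thus ?case using zsp.zsp_add[of "a*h" _ "b*h"] by (simp add: distrib_right)
next
  case (zsp_neg a) thus ?case using zsp.zsp_neg[of "a*h"] by simp
qed (simp add: zsp.zsp_0)

lemma zsp_mult_left: "b \<in> zsp H \<Longrightarrow> g \<in> G \<Longrightarrow> g * b \<in> zsp (pset G H)"
proof (induction rule: zsp.induct)
  case (zsp_g h) thus ?case by (intro zsp.zsp_g) (auto simp: pset_def)
next
  case (zsp_add a b) thus ?case using zsp.zsp_add[of "g*a" _ "g*b"] by (simp add: distrib_left)
next
  case (zsp_neg a) thus ?case using zsp.zsp_neg[of "g*a"] by simp
qed (simp add: zsp.zsp_0)

lemma algebraic_int_add_mult:
  fixes x y :: complex
  assumes "algebraic_int x" "algebraic_int y"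
  shows "algebraic_int (x + y) \<and> algebraic_int (x * y)"
proof -
  obtain G where G: "stab x G" using algebraic_int_stab[OF assms(1)] by blast
  obtain H where H: "stab y H" using algebraic_int_stab[OF assms(2)] by blast
  define P where "P = pset G H"
  have finP: "finite P" using G H unfolding P_def pset_def stab_def by auto
  obtain g0 h0 where g0: "g0 \<in> G" "g0 \<noteq> 0" and h0: "h0 \<in> H" "h0 \<noteq> 0"
    using G H unfolding stab_def by blast
  have nzP: "\<exists>p\<in>P. p \<noteq> 0" using g0 h0 unfolding P_def pset_def by force
  have xP: "x * p \<in> zsp P" if "p \<in> P" for p
  proof -
    from that obtain g h where gh: "g \<in> G" "h \<in> H" "p = g * h" unfolding P_def pset_def by auto
    have "x * g \<in> zsp G" using G gh unfolding stab_def by auto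
    hence "(x * g) * h \<in> zsp P" using zsp_mult_right gh unfolding P_def by blast
    thus ?thesis using gh by (simp add: mult.assoc)
  qed
  have yP: "y * p \<in> zsp P" if "p \<in> P" for p
  proof -
    from that obtain g h where gh: "g \<in> G" "h \<in> H" "p = g * h" unfolding P_def pset_def by auto
    have "y * h \<in> zsp H" using H gh unfolding stab_def by auto
    hence "g * (y * h) \<in> zsp P" using zsp_mult_left gh unfolding P_def by blast
    thus ?thesis using gh by (simp add: algebra_simps)
  qed
  have "\<forall>p\<in>P. (x + y) * p \<in> zsp P"
  proof
    fix p assume "p \<in> P"
    have "x * p + y * p \<in> zsp P" by (rule zsp_add[OF xP[OF \<open>p \<in> P\<close>] yP[OF \<open>p \<in> P\<close>]])
    thus "(x + y) * p \<in> zsp P" by (simp add: distrib_right)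
  qed
  hence s1: "stab (x + y) P" unfolding stab_def using finP nzP by blast
  have "\<forall>p\<in>P. x * y * p \<in> zsp P"
  proof
    fix p assume "p \<in> P"
    have "x * (y * p) \<in> zsp P" using zsp_mono_mult[OF xP yP[OF \<open>p \<in> P\<close>]] by blast
    thus "x * y * p \<in> zsp P" by (simp add: mult.assoc)
  qed
  hence s2: "stab (x * y) P" unfolding stab_def using finP nzP by blast
  show ?thesis using stab_imp_algebraic_int[OF s1] stab_imp_algebraic_int[OF s2] by (rule conjI)
qed

lemma algebraic_int_add: "algebraic_int (x::complex) \<Longrightarrow> algebraic_int y \<Longrightarrow> algebraic_int (x + y)"
  using algebraic_int_add_mult by blast

lemma algebraic_int_mult: "algebraic_int (x::complex) \<Longrightarrow> algebraic_int y \<Longrightarrow> algebraic_int (x * y)"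
  using algebraic_int_add_mult by blast

lemma algebraic_int_diff: "algebraic_int (x::complex) \<Longrightarrow> algebraic_int y \<Longrightarrow> algebraic_int (x - y)"
  using algebraic_int_add[of x "-y"] algebraic_int_minus_iff[of y] by simp

lemma algebraic_int_power: "algebraic_int (x::complex) \<Longrightarrow> algebraic_int (x ^ n)"
proof (induction n)
  case (Suc n) thus ?case using algebraic_int_mult[of x "x^n"] by simp
qed simp

lemma algebraic_int_sum: "(\<And>i. i \<in> I \<Longrightarrow> algebraic_int (f i :: complex)) \<Longrightarrow> algebraic_int (sum f I)"
proof (induction I rule: infinite_finite_induct)
  case (insert i I) thus ?case using algebraic_int_add[of "f i" "sum f I"] by simp
qed simp_all

lemma poly_of_int_poly_pCons:
  "poly (of_int_poly (pCons a p)) (x::complex) = of_int a + x * poly (of_int_poly p) x"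
  apply (cases "a = 0 \<and> p = 0")
   apply simp
  apply (subst map_poly_pCons)
   apply simp
  apply (simp only: poly_pCons)
  done

lemma algebraic_int_poly:
  assumes "algebraic_int (x::complex)"
  shows "algebraic_int (poly (of_int_poly p) x)"
proof (induction p)
  case (pCons a p)
  show ?case unfolding poly_of_int_poly_pCons
    by (intro algebraic_int_add algebraic_int_mult algebraic_int_of_int assms pCons(2))
qed simp



definition int2 :: "complex \<Rightarrow> bool" where
  "int2 x \<longleftrightarrow> (\<exists>r::int. odd r \<and> algebraic_int (of_int r * x))"

lemma int2_alg: "algebraic_int x \<Longrightarrow> int2 x"
  unfolding int2_def by (intro exI[of _ 1]) simp

lemma int2_of_int: "int2 (of_int k)"
  by (rule int2_alg) simp

lemma int2_add: assumes "int2 x" "int2 y" shows "int2 (x + y)"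
proof -
  obtain r s where r: "odd r" "algebraic_int (of_int r * x)" and s: "odd s" "algebraic_int (of_int s * y)"
    using assms unfolding int2_def by blast
  have "of_int (r * s) * (x + y) = of_int s * (of_int r * x) + of_int r * (of_int s * y)"
    by (simp add: algebra_simps)
  hence "algebraic_int (of_int (r * s) * (x + y))"
    by (subst \<open>_ = _\<close>) (intro algebraic_int_add algebraic_int_mult algebraic_int_of_int r s)
  thus ?thesis unfolding int2_def using r s by (intro exI[of _ "r*s"]) simp
qed

lemma int2_mult: assumes "int2 x" "int2 y" shows "int2 (x * y)"
proof -
  obtain r s where r: "odd r" "algebraic_int (of_int r * x)" and s: "odd s" "algebraic_int (of_int s * y)"
    using assms unfolding int2_def by blast
  have "of_int (r * s) * (x * y) = (of_int r * x) * (of_int s * y)"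
    by (simp add: algebra_simps)
  hence "algebraic_int (of_int (r * s) * (x * y))"
    by (subst \<open>_ = _\<close>) (intro algebraic_int_mult r s)
  thus ?thesis unfolding int2_def using r s by (intro exI[of _ "r*s"]) simp
qed

lemma int2_neg: assumes "int2 x" shows "int2 (- x)"
  using int2_mult[OF int2_of_int[of "-1"] assms] by simp

lemma int2_diff: assumes "int2 x" "int2 y" shows "int2 (x - y)"
  using int2_add[OF assms(1) int2_neg[OF assms(2)]] by simp

lemma int2_power: assumes "int2 x" shows "int2 (x ^ n)"
proof (induction n)
  case 0 thus ?case using int2_of_int[of 1] by simp
next
  case (Suc n) thus ?case using int2_mult[OF assms Suc] by simp
qed

lemma int2_sum: "(\<And>i. i \<in> I \<Longrightarrow> int2 (f i)) \<Longrightarrow> int2 (sum f I)"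
proof (induction I rule: infinite_finite_induct)
  case (insert i I) thus ?case using int2_add[of "f i" "sum f I"] by simp
qed (simp_all add: int2_of_int[of 0, simplified])

lemma int2_half_even:
  assumes "int2 (of_int s / 2)"
  shows "even s"
proof -
  obtain r where r: "odd r" "algebraic_int (of_int r * (of_int s / 2) :: complex)"
    using assms unfolding int2_def by blast
  have eq: "of_int r * (of_int s / 2) = (of_int (r * s) / 2 :: complex)" by simp
  have "(of_int (r * s) / 2 :: complex) \<in> \<rat>" by simp
  hence "(of_int (r * s) / 2 :: complex) \<in> \<int>"
    using rational_algebraic_int_is_int r(2) eq by metis
  then obtain k where k: "(of_int (r * s) / 2 :: complex) = of_int k" by (elim Ints_cases)
  hence "(of_int (r * s) :: complex) = of_int (2 * k)" by (simp add: field_simps)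
  hence "r * s = 2 * k" using of_int_eq_iff by blast
  hence "even (r * s)" by simp
  thus ?thesis using r(1) by simp
qed

lemma int2_half: "\<not> int2 (1/2)"
proof
  assume "int2 (1/2)"
  hence "int2 (of_int 1 / 2)" by simp
  thus False using int2_half_even[of 1] by simp
qed

lemma int2_inv_pow2: assumes "d \<ge> 1" shows "\<not> int2 (1 / 2 ^ d)"
proof
  assume "int2 (1 / 2 ^ d)"
  hence "int2 (of_int (2 ^ (d - 1)) * (1 / 2 ^ d))" by (rule int2_mult[OF int2_of_int])
  moreover have "(of_int (2 ^ (d - 1)) :: complex) * (1 / 2 ^ d) = 1 / 2"
    using assms by (cases d) (simp_all add: field_simps)
  ultimately have "int2 (1/2)" by metis
  thus False using int2_half by simp
qed

lemma oddu:
  fixes \<delta> :: complex and w :: int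
  assumes dl: "algebraic_int \<delta>" and w: "odd w"
  shows "of_int w + 2 * \<delta> \<noteq> 0 \<and> (\<exists>s::int. odd s \<and> algebraic_int (of_int s / (of_int w + 2 * \<delta>)))"
proof -
  obtain g where g: "poly (of_int_poly g) \<delta> = 0" "lead_coeff g = 1"
    using dl unfolding algebraic_int_altdef_ipoly by blast
  define d where "d = degree g"
  define h :: "int poly" where "h = (\<Sum>k\<le>d. Polynomial.smult (coeff g k * 2^(d-k)) ([:-w,1:]^k))"
  define u where "u = of_int w + 2 * \<delta>"
  have "poly (of_int_poly h) u = (\<Sum>k\<le>d. of_int (coeff g k * 2^(d-k)) * (u - of_int w)^k)"
    unfolding h_def of_int_poly_hom.hom_sum poly_sum
  proof (rule sum.cong)
    fix k
    show "poly (of_int_poly (Polynomial.smult (coeff g k * 2 ^ (d - k)) ([:- w, 1:] ^ k))) u =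
       of_int (coeff g k * 2 ^ (d - k)) * (u - of_int w) ^ k"
      by (simp add: hom_distribs poly_power)
  qed simp
  also have "\<dots> = (\<Sum>k\<le>d. 2^d * (of_int (coeff g k) * \<delta>^k))"
  proof (rule sum.cong)
    fix k assume "k \<in> {..d}"
    hence "(2::complex)^(d-k) * 2^k = 2^d" by (simp add: power_add[symmetric])
    thus "of_int (coeff g k * 2^(d-k)) * (u - of_int w)^k = 2^d * (of_int (coeff g k) * \<delta>^k)"
      unfolding u_def by (simp add: power_mult_distrib algebra_simps)
  qed simp
  also have "\<dots> = 2^d * poly (of_int_poly g) \<delta>"
    unfolding poly_altdef d_def by (simp add: sum_distrib_left coeff_map_poly degree_map_poly)
  finally have hu: "poly (of_int_poly h) u = 0" using g by simp
  have degh: "degree h \<le> d" unfolding h_def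
    by (intro degree_sum_le) (auto intro: order.trans[OF degree_smult_le] simp: degree_linear_power)
  have "coeff h d = (\<Sum>k\<le>d. coeff g k * 2^(d-k) * coeff ([:-w,1:]^k) d)"
    unfolding h_def by (simp add: coeff_sum)
  also have "\<dots> = coeff g d * 2^(d-d) * coeff ([:-w,1:]^d) d"
  proof -
    have "(\<Sum>k\<in>{..<d}. coeff g k * 2^(d-k) * coeff ([:-w,1:]^k) d) = 0"
      by (intro sum.neutral ballI) (simp add: coeff_eq_0 degree_linear_power)
    moreover have "{..d} = insert d {..<d}" by auto
    ultimately show ?thesis by simp
  qed
  also have "\<dots> = 1" using g(2) unfolding d_def by (simp add: coeff_linear_power)
  finally have chd: "coeff h d = 1" .
  hence "degree h = d" using degh by (metis le_antisym le_degree one_neq_zero)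
  hence lch: "lead_coeff h = 1" using chd by simp
  define h0 where "h0 = coeff h 0"
  have "h0 = poly h 0" unfolding h0_def by (simp add: poly_0_coeff_0)
  also have "\<dots> = (\<Sum>k\<le>d. coeff g k * 2^(d-k) * (-w)^k)"
    unfolding h_def by (simp add: poly_sum poly_power)
  also have "\<dots> = (\<Sum>k<d. coeff g k * 2^(d-k) * (-w)^k) + coeff g d * (-w)^d"
  proof -
    have "{..d} = insert d {..<d}" by auto
    thus ?thesis by simp
  qed
  finally have h0eq: "h0 = (\<Sum>k<d. coeff g k * 2^(d-k) * (-w)^k) + coeff g d * (-w)^d" .
  have "even (\<Sum>k<d. coeff g k * 2^(d-k) * (-w)^k)"
    by (intro dvd_sum) (simp add: dvd_mult2 dvd_mult)
  moreover have "odd (coeff g d * (-w)^d)" using g(2) w unfolding d_def by simp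
  ultimately have oh0: "odd h0" using h0eq by simp
  obtain a q where hq: "h = pCons a q" by (cases h)
  have a: "a = h0" unfolding h0_def hq by simp
  have "0 = of_int h0 + u * poly (of_int_poly q) u"
    using hu unfolding hq poly_of_int_poly_pCons a by simp
  hence u0: "u \<noteq> 0" using oh0 by (metis add.right_neutral mult_zero_left of_int_eq_0_iff even_zero)
  hence "of_int h0 / u = - poly (of_int_poly q) u"
    using \<open>0 = _\<close> by (simp add: field_simps eq_neg_iff_add_eq_0)
  moreover have "algebraic_int u"
    unfolding u_def by (intro algebraic_int_add algebraic_int_mult algebraic_int_of_int dl) simp
  hence "algebraic_int (- poly (of_int_poly q) u)"
    using algebraic_int_poly by simp
  ultimately show ?thesis using u0 oh0 unfolding u_def by metis
qed

lemma int2_inv_odd: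
  assumes "int2 \<gamma>" "odd t"
  shows "of_int t + 2 * \<gamma> \<noteq> 0 \<and> int2 (1 / (of_int t + 2 * \<gamma>))"
proof -
  obtain r where r: "odd r" "algebraic_int (of_int r * \<gamma>)" using assms(1) unfolding int2_def by blast
  define \<delta> where "\<delta> = of_int r * \<gamma>"
  have o: "odd (r * t)" using r(1) assms(2) by simp
  obtain s where s: "odd s" "algebraic_int (of_int s / (of_int (r*t) + 2 * \<delta>))"
    and nz: "of_int (r*t) + 2 * \<delta> \<noteq> 0"
    using oddu[OF r(2)[folded \<delta>_def] o] by blast
  have eq: "of_int (r*t) + 2 * \<delta> = of_int r * (of_int t + 2 * \<gamma>)"
    unfolding \<delta>_def by (simp add: algebra_simps)
  have nz2: "of_int t + 2 * \<gamma> \<noteq> 0" using nz eq by simp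
  have "of_int s * (1 / (of_int t + 2 * \<gamma>)) = of_int r * (of_int s / (of_int (r*t) + 2 * \<delta>))"
    using nz eq nz2 r(1) by (simp add: field_simps)
  hence "algebraic_int (of_int s * (1 / (of_int t + 2 * \<gamma>)))"
    using algebraic_int_mult[OF algebraic_int_of_int s(2)] by simp
  thus ?thesis using nz2 s(1) unfolding int2_def by blast
qed



lemma altsum: "(\<Sum>i<2*M+1. (-1::int)^i) = 1"
  by (induction M) (simp_all add: sum.lessThan_Suc)

lemma zero_pow_sum: "e \<ge> 1 \<Longrightarrow> (\<Sum>p<e. (0::int) ^ (e - 1 - p)) = 1"
proof -
  assume e: "e \<ge> 1"
  have "{..<e} = insert (e-1) {..<e-1}" using e by auto
  moreover have "(\<Sum>p<e-1. (0::int) ^ (e - 1 - p)) = 0" by (intro sum.neutral) auto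
  ultimately show ?thesis by simp
qed

definition Vp :: "nat \<Rightarrow> int poly" where
  "Vp e = (\<Sum>p<e. [:1,1:]^p * [:0,-1:]^(e-1-p))"

definition Pp :: "nat \<Rightarrow> nat \<Rightarrow> int poly" where
  "Pp m e = [:1,1:] * [:2^m,1:] * Vp e - monom (2^m) e"

lemma poly_Vp: "poly (of_int_poly (Vp e)) (x::complex) = (\<Sum>p<e. (1+x)^p * (-x)^(e-1-p))"
  unfolding Vp_def of_int_poly_hom.hom_sum poly_sum
  by (intro sum.cong refl) (simp add: of_int_poly_hom.hom_mult of_int_poly_hom.hom_power poly_power)

lemma poly_Pp: "poly (of_int_poly (Pp m e)) (x::complex) =
   (1+x) * (x + 2^m) * poly (of_int_poly (Vp e)) x - 2^m * x^e"
  unfolding Pp_def of_int_poly_hom.hom_minus of_int_poly_hom.hom_mult poly_diff poly_mult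
  by (simp add: poly_monom algebra_simps)

lemma Vp_props:
  assumes "odd e"
  shows "degree (Vp e) = e - 1 \<and> coeff (Vp e) (e-1) = 1 \<and> coeff (Vp e) 0 = 1"
proof -
  have dterm: "degree ([:1,1:]^p * [:0,-1:]^(e-1-p) :: int poly) = e - 1" if "p < e" for p
    using that by (simp add: degree_mult_eq degree_power_eq)
  have cterm: "coeff ([:1,1:]^p * [:0,-1:]^(e-1-p) :: int poly) (e-1) = (-1)^(e-1-p)" if "p < e" for p
  proof -
    have "coeff ([:1,1:]^p * [:0,-1:]^(e-1-p) :: int poly) (degree ([:1,1:]^p :: int poly) + degree ([:0,-1:]^(e-1-p) :: int poly))
       = coeff ([:1,1:]^p :: int poly) (degree ([:1,1:]^p :: int poly)) * coeff ([:0,-1:]^(e-1-p) :: int poly) (degree ([:0,-1:]^(e-1-p) :: int poly))"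
      by (rule coeff_mult_degree_sum)
    moreover have "degree ([:1,1:]^p :: int poly) + degree ([:0,-1:]^(e-1-p) :: int poly) = e - 1"
      using that by (simp add: degree_power_eq)
    ultimately show ?thesis by (simp add: lead_coeff_power)
  qed
  have degle: "degree (Vp e) \<le> e - 1" unfolding Vp_def
  proof (rule degree_sum_le)
    fix p assume "p \<in> {..<e}"
    thus "degree ([:1,1:]^p * [:0,-1:]^(e-1-p) :: int poly) \<le> e - 1" using dterm[of p] by simp
  qed simp
  have "coeff (Vp e) (e-1) = (\<Sum>p<e. (-1::int)^(e-1-p))"
    unfolding Vp_def coeff_sum
  proof (rule sum.cong)
    fix p assume "p \<in> {..<e}"
    thus "coeff ([:1,1:]^p * [:0,-1:]^(e-1-p) :: int poly) (e-1) = (-1)^(e-1-p)" using cterm[of p] by simp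
  qed simp
  also have "\<dots> = (\<Sum>p<e. (-1::int)^p)"
  proof -
    have "(\<Sum>p<e. (-1::int)^(e-1-p)) = (\<Sum>p<e. (-1::int)^(e - Suc p))" by simp
    also have "\<dots> = (\<Sum>p<e. (-1::int)^p)" by (rule sum.nat_diff_reindex)
    finally show ?thesis .
  qed
  also have "\<dots> = 1"
  proof -
    obtain M where "e = 2*M+1" using assms oddE by blast
    thus ?thesis using altsum by simp
  qed
  finally have c1: "coeff (Vp e) (e-1) = 1" .
  hence "degree (Vp e) = e - 1" using degle by (metis le_antisym le_degree one_neq_zero)
  moreover have "coeff (Vp e) 0 = 1"
  proof -
    have "coeff (Vp e) 0 = poly (Vp e) 0" by (simp add: poly_0_coeff_0)
    also have "\<dots> = (\<Sum>p<e. (0::int) ^ (e - 1 - p))" unfolding Vp_def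
      by (simp add: poly_sum poly_power)
    also have "\<dots> = 1" using assms zero_pow_sum[of e] by (cases e) auto
    finally show ?thesis .
  qed
  ultimately show ?thesis using c1 by simp
qed

lemma Pp_props:
  assumes "odd e" "m \<ge> 1"
  shows "lead_coeff (Pp m e) = 1 \<and> coeff (Pp m e) 0 = 2^m \<and> odd (coeff (Pp m e) 1)"
proof -
  have V: "degree (Vp e) = e - 1" "coeff (Vp e) (e-1) = 1" "coeff (Vp e) 0 = 1"
    using Vp_props[OF assms(1)] by auto
  have e1: "e \<ge> 1" using assms(1) by (cases e) auto
  define AB :: "int poly" where "AB = [:1,1:] * [:2^m,1:]"
  have AB: "AB = [:2^m, 2^m + 1, 1:]" unfolding AB_def by simp
  have dAB: "degree AB = 2" unfolding AB by simp
  have "coeff (AB * Vp e) (degree AB + degree (Vp e)) = coeff AB (degree AB) * coeff (Vp e) (degree (Vp e))"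
    by (rule coeff_mult_degree_sum)
  hence c: "coeff (AB * Vp e) (e + 1) = 1" using V dAB e1 by (simp add: AB)
  have dle: "degree (Pp m e) \<le> e + 1"
    unfolding Pp_def AB_def[symmetric]
  proof (rule degree_diff_le)
    show "degree (AB * Vp e) \<le> e + 1" using degree_mult_le[of AB "Vp e"] dAB V e1 by simp
    show "degree (monom (2 ^ m) e :: int poly) \<le> e + 1" by (simp add: degree_monom_le le_SucI)
  qed
  have "coeff (Pp m e) (e+1) = 1" unfolding Pp_def AB_def[symmetric] using c by simp
  hence lc: "lead_coeff (Pp m e) = 1" using dle by (metis le_antisym le_degree one_neq_zero)
  have c0: "coeff (Pp m e) 0 = 2^m"
    unfolding Pp_def AB_def[symmetric] using V e1 by (simp add: AB coeff_mult)
  have "coeff (Pp m e) 1 = coeff (AB * Vp e) 1 - (if e = 1 then 2^m else 0)"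
    unfolding Pp_def AB_def[symmetric] by (simp add: coeff_monom)
  also have "coeff (AB * Vp e) 1 = 2^m * coeff (Vp e) 1 + (2^m + 1) * coeff (Vp e) 0"
    by (simp add: coeff_mult AB atMost_Suc)
  finally have "coeff (Pp m e) 1 = 2^m * coeff (Vp e) 1 + (2^m + 1) - (if e = 1 then 2^m else 0)"
    using V by simp
  moreover have "even ((2::int)^m)" using assms(2) by simp
  ultimately have "odd (coeff (Pp m e) 1)" by auto
  thus ?thesis using lc c0 by simp
qed

lemma core:
  fixes z :: complex
  assumes m: "m \<ge> 1" and N: "N \<ge> 1" and z1: "z \<noteq> 1" and zm1: "z \<noteq> -1"
    and eq: "z^(2*N) * (2^m * z + (2^m - 1)) = (2^m - 1) * z + 2^m"
  shows "algebraic_int (-1/(1+z)) \<and>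
         (\<exists>q Y. odd q \<and> algebraic_int Y \<and> 2^m + (-1/(1+z)) * (of_int q + (-1/(1+z)) * Y) = 0)"
proof -
  define e where "e = 2*N - 1"
  have oe: "odd e" and e1: "e \<ge> 1" and se: "Suc e = 2*N" using N unfolding e_def by auto
  define \<rho> where "\<rho> = -1/(1+z)"
  define b :: complex where "b = 2^m"
  have w0: "1 + z \<noteq> 0" using zm1 by (metis add.commute add_eq_0_iff)
  have zz: "z^(2*N) = z * z^e" using se by (metis power_Suc)
  have key: "z * (b*z + (b-1)) * (z^e - 1) = b * (1 - z^2)"
  proof -
    have "z * z^e * (b*z + (b-1)) = (b-1) * z + b" using eq zz unfolding b_def by simp
    thus ?thesis by (simp add: algebra_simps power2_eq_square)
  qed
  have r1: "1 + \<rho> = z / (1+z)" unfolding \<rho>_def using w0 by (simp add: field_simps)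
  have r2: "\<rho> + b = (b*z + (b-1)) / (1+z)" unfolding \<rho>_def using w0 by (simp add: field_simps)
  have r3: "\<rho>^e = - (1 / (1+z)^e)" unfolding \<rho>_def using oe by (simp add: power_divide)
  have r4: "(1 + \<rho>)^e = z^e / (1+z)^e" unfolding r1 by (simp add: power_divide)
  have r5: "1 + 2*\<rho> = (z - 1) / (1+z)" unfolding \<rho>_def using w0 by (simp add: field_simps)
  have F: "(1+\<rho>)*(\<rho>+b)*((1+\<rho>)^e + \<rho>^e) = b*(1+2*\<rho>)*\<rho>^e"
  proof -
    have "(1+\<rho>)*(\<rho>+b)*((1+\<rho>)^e + \<rho>^e) = (z * (b*z + (b-1)) * (z^e - 1)) / ((1+z)^2 * (1+z)^e)"
      unfolding r1 r2 r3 r4 using w0 by (simp add: field_simps power2_eq_square)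
    also have "\<dots> = b * (1 - z^2) / ((1+z)^2 * (1+z)^e)" by (simp only: key)
    also have "\<dots> = b * ((1 - z) * (1 + z)) / ((1+z) * ((1+z) * (1+z)^e))"
      by (simp add: power2_eq_square algebra_simps)
    also have "\<dots> = b * (1 - z) / ((1+z) * (1+z)^e)"
      using w0 by (simp add: mult.assoc[symmetric])
    also have "\<dots> = (- (b * (z - 1))) / ((1+z) * (1+z)^e)"
      by (simp add: algebra_simps)
    also have "\<dots> = b*(1+2*\<rho>)*\<rho>^e"
      unfolding r3 r5 by simp
    finally show ?thesis .
  qed
  define V where "V = (\<Sum>p<e. (1+\<rho>)^p * (-\<rho>)^(e-1-p))"
  have VV: "(1 + 2*\<rho>) * V = (1+\<rho>)^e + \<rho>^e"
  proof -
    have "(1+\<rho>)^(Suc (e-1)) - (-\<rho>)^(Suc (e-1)) = ((1+\<rho>) - (-\<rho>)) * (\<Sum>p<Suc (e-1). (1+\<rho>)^p * (-\<rho>)^(e-1-p))"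
      by (rule diff_power_eq_sum)
    moreover have "Suc (e-1) = e" using e1 by simp
    ultimately have "(1+\<rho>)^e - (-\<rho>)^e = (1 + 2*\<rho>) * V" unfolding V_def by (simp add: algebra_simps)
    thus ?thesis using oe by simp
  qed
  have n12: "1 + 2*\<rho> \<noteq> 0" unfolding r5 using z1 w0 by simp
  have F': "(1+\<rho>)*(\<rho>+b)*V = b*\<rho>^e"
  proof -
    have "(1 + 2*\<rho>) * ((1+\<rho>)*(\<rho>+b)*V) = (1+\<rho>)*(\<rho>+b)*((1 + 2*\<rho>)*V)"
      by (simp only: mult_ac)
    also have "\<dots> = (1+\<rho>)*(\<rho>+b)*((1+\<rho>)^e + \<rho>^e)" by (simp only: VV)
    also have "\<dots> = (1 + 2*\<rho>) * (b*\<rho>^e)" unfolding F by (simp only: mult_ac)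
    finally have "(1 + 2*\<rho>) * ((1+\<rho>)*(\<rho>+b)*V) = (1 + 2*\<rho>) * (b*\<rho>^e)" .
    thus ?thesis using n12 by simp
  qed
  have P0: "poly (of_int_poly (Pp m e)) \<rho> = 0"
    unfolding poly_Pp poly_Vp using F' unfolding V_def b_def by (simp add: algebra_simps)
  have PP: "lead_coeff (Pp m e) = 1" "coeff (Pp m e) 0 = 2^m" "odd (coeff (Pp m e) 1)"
    using Pp_props[OF oe m] by auto
  have alg: "algebraic_int \<rho>"
    unfolding algebraic_int_altdef_ipoly using P0 PP(1) by blast
  obtain c0 R0 where h1: "Pp m e = pCons c0 R0" by (cases "Pp m e")
  obtain c1 R where h2: "R0 = pCons c1 R" by (cases R0)
  have c0: "c0 = 2^m" using PP(2) h1 by simp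
  have c1: "odd c1" using PP(3) h1 h2 by simp
  have "0 = of_int c0 + \<rho> * (of_int c1 + \<rho> * poly (of_int_poly R) \<rho>)"
    using P0 unfolding h1 h2 poly_of_int_poly_pCons by simp
  hence "2^m + \<rho> * (of_int c1 + \<rho> * poly (of_int_poly R) \<rho>) = 0" using c0 by simp
  moreover have "algebraic_int (poly (of_int_poly R) \<rho>)" using algebraic_int_poly[OF alg] .
  ultimately show ?thesis using alg c1 unfolding \<rho>_def by blast
qed

lemma keyeq:
  fixes z :: complex
  assumes N: "N \<ge> 1" and eq: "z^(2*N) * (2^m * z + (2^m - 1)) = (2^m - 1) * z + 2^m"
  shows "z * (2^m*z + (2^m-1)) * (z^(2*N-1) - 1) = 2^m * (1 - z^2)"
proof -
  have "2*N = Suc (2*N-1)" using N by simp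
  hence "z^(2*N) = z * z^(2*N-1)" by (metis power_Suc)
  hence "z * z^(2*N-1) * (2^m*z + (2^m-1)) = (2^m-1) * z + 2^m" using eq by simp
  thus ?thesis by (simp add: algebra_simps power2_eq_square)
qed

lemma pow2_odd_decomp: "n \<ge> (1::nat) \<Longrightarrow> \<exists>j q. n = 2^j * q \<and> odd q"
proof (induction n rule: less_induct)
  case (less n)
  show ?case
  proof (cases "odd n")
    case True thus ?thesis by (intro exI[of _ 0] exI[of _ n]) simp
  next
    case False
    then obtain k where k: "n = 2 * k" by blast
    hence "k < n" "k \<ge> 1" using less.prems by auto
    then obtain j q where "k = 2^j * q" "odd q" using less.IH by blast
    thus ?thesis using k by (intro exI[of _ "Suc j"] exI[of _ q]) simp
  qed
qed

lemma alg_root_unity: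
  fixes z :: complex
  assumes n: "n \<ge> 1" and zn: "z^n = 1"
  shows "algebraic_int z"
proof -
  define p :: "int poly" where "p = monom 1 n - 1"
  have c: "coeff p n = 1" unfolding p_def using n by (simp add: coeff_monom)
  have "degree p \<le> n" unfolding p_def
    by (rule degree_diff_le) (simp_all add: degree_monom_le)
  hence "lead_coeff p = 1" using c by (metis le_antisym le_degree one_neq_zero)
  moreover have "poly (of_int_poly p) z = 0" unfolding p_def using zn
    by (simp add: of_int_poly_hom.hom_minus poly_monom)
  ultimately show ?thesis unfolding algebraic_int_altdef_ipoly by blast
qed

lemma rou:
  fixes z :: complex
  assumes m: "m \<ge> 1" and N: "N \<ge> 1" and z1: "z \<noteq> 1" and zm1: "z \<noteq> -1"
    and n: "n \<ge> 1" and zn: "z^n = 1"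
    and eq: "z^(2*N) * (2^m * z + (2^m - 1)) = (2^m - 1) * z + 2^m"
  shows False
proof -
  define e where "e = 2*N - 1"
  define b :: complex where "b = 2^m"
  have key: "z * (b*z + (b-1)) * (z^e - 1) = b * (1 - z^2)"
    using keyeq[OF N eq] unfolding e_def b_def .
  have z0: "z \<noteq> 0" using zn n by (metis power_0_left not_one_le_zero zero_neq_one)
  have az: "algebraic_int z" by (rule alg_root_unity[OF n zn])
  have "n = Suc (n-1)" using n by simp
  hence "z * z^(n-1) = 1" using zn by (metis power_Suc)
  hence iz: "1/z = z^(n-1)" using z0 by (simp add: field_simps)
  have i2z: "int2 z" by (rule int2_alg[OF az])
  have i2iz: "int2 (1/z)" unfolding iz by (rule int2_alg[OF algebraic_int_power[OF az]])
  have "m = Suc (m-1)" using m by simp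
  hence bb: "(2::complex)^m = 2 * 2^(m-1)" by (metis power_Suc)
  have Aeq: "of_int (2^m - 1) + 2 * (of_int (2^(m-1)) * z) = b*z + (b-1)"
    unfolding b_def using bb by (simp add: algebra_simps)
  have oa: "odd ((2::int)^m - 1)" using m by simp
  have i2g: "int2 (of_int (2^(m-1)) * z)" by (rule int2_mult[OF int2_of_int i2z])
  from int2_inv_odd[OF i2g oa] have A0: "b*z + (b-1) \<noteq> 0" and iA: "int2 (1/(b*z + (b-1)))"
    unfolding Aeq by auto
  define E where "E = (1 - z^2) * (1/z) * (1/(b*z + (b-1)))"
  have iE: "int2 E" unfolding E_def
    by (intro int2_mult iA i2iz int2_diff int2_of_int[of 1, simplified] int2_power i2z)
  define \<eta> where "\<eta> = z^e"
  have etaE: "\<eta> - 1 = b * E"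
  proof -
    have nz: "z * (b*z + (b-1)) \<noteq> 0" using z0 A0 by simp
    have "(\<eta> - 1) * (z * (b*z + (b-1))) = b * (1 - z^2)" using key unfolding \<eta>_def by (simp only: mult_ac)
    hence "\<eta> - 1 = b * (1 - z^2) / (z * (b*z + (b-1)))" using nz by (simp add: eq_divide_eq)
    thus ?thesis unfolding E_def by simp
  qed
  have b0: "b \<noteq> 0" unfolding b_def by simp
  have aeta: "algebraic_int \<eta>" unfolding \<eta>_def by (rule algebraic_int_power[OF az])
  have etan: "\<eta>^n = 1" unfolding \<eta>_def using zn by (metis power_mult mult.commute power_one)
  have G: "int2 ((\<eta>^r - 1)/b)" for r
  proof -
    have "\<eta>^r - 1 = (\<eta> - 1) * (\<Sum>i<r. \<eta>^i)" by (rule power_diff_1_eq)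
    hence "(\<eta>^r - 1)/b = E * (\<Sum>i<r. \<eta>^i)" using etaE b0 by (simp add: field_simps)
    moreover have "int2 (\<Sum>i<r. \<eta>^i)"
      by (rule int2_sum) (rule int2_alg[OF algebraic_int_power[OF aeta]])
    ultimately show ?thesis using int2_mult[OF iE] by simp
  qed
  have ODD: "\<eta>^r = 1" if s: "odd s" and rs: "(\<eta>^r)^s = 1" for r s
  proof (rule ccontr)
    assume ne: "\<eta>^r \<noteq> 1"
    define \<mu> where "\<mu> = \<eta>^r"
    have "(\<mu> - 1) * (\<Sum>i<s. \<mu>^i) = \<mu>^s - 1" by (simp add: power_diff_1_eq)
    hence S0: "(\<Sum>i<s. \<mu>^i) = 0" using rs ne unfolding \<mu>_def by simp
    have "of_nat s = (\<Sum>i<s. (1::complex))" by simp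
    also have "\<dots> = (\<Sum>i<s. (1::complex)) - (\<Sum>i<s. \<mu>^i)" using S0 by simp
    also have "\<dots> = - (\<Sum>i<s. \<mu>^i - 1)" by (simp add: sum_subtractf)
    finally have "of_nat s / b = - (\<Sum>i<s. (\<eta>^(r*i) - 1) / b)"
      unfolding \<mu>_def by (simp add: power_mult sum_divide_distrib)
    moreover have "int2 (- (\<Sum>i<s. (\<eta>^(r*i) - 1) / b))"
      by (rule int2_neg, rule int2_sum, rule G)
    ultimately have "int2 (of_nat s / b)" by simp
    hence "int2 (of_int (2^(m-1)) * (of_nat s / b))" by (rule int2_mult[OF int2_of_int])
    moreover have "of_int (2^(m-1)) * (of_nat s / b) = of_int (int s) / (2::complex)"
      unfolding b_def using bb by (simp add: field_simps)
    ultimately have "int2 (of_int (int s) / 2)" by metis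
    hence "even (int s)" by (rule int2_half_even)
    thus False using s by simp
  qed
  obtain j q where jo: "n = 2^j * q" "odd q" using pow2_odd_decomp[OF n] by blast
  have ej: "\<eta>^(2^j) = 1" by (rule ODD[OF jo(2)]) (use etan jo in \<open>simp add: power_mult\<close>)
  have eta1: "\<eta> \<noteq> 1"
  proof
    assume "\<eta> = 1"
    hence "b * (1 - z^2) = 0" using key unfolding \<eta>_def by simp
    hence "(1 - z) * (1 + z) = 0" using b0 by (simp add: power2_eq_square algebra_simps)
    thus False using z1 zm1 by (simp add: add_eq_0_iff)
  qed
  define t0 where "t0 = (LEAST t. \<eta>^(2^t) = 1)"
  have t0: "\<eta>^(2^t0) = 1" unfolding t0_def by (rule LeastI[of _ j]) (rule ej)
  have "t0 \<noteq> 0"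
  proof
    assume "t0 = 0" thus False using t0 eta1 by simp
  qed
  then obtain t1 where t1: "t0 = Suc t1" by (cases t0) auto
  define \<mu> where "\<mu> = \<eta>^(2^t1)"
  have mu1: "\<mu> \<noteq> 1" unfolding \<mu>_def using not_less_Least[of t1 "\<lambda>t. \<eta>^(2^t) = 1"] t1 t0_def by auto
  have "\<mu>^2 = 1" unfolding \<mu>_def using t0 t1 by (simp add: power_mult[symmetric] mult.commute)
  hence "(\<mu> - 1) * (\<mu> + 1) = 0" by (simp add: power2_eq_square algebra_simps)
  hence "\<mu> + 1 = 0" using mu1 by simp
  hence mum1: "\<mu> = -1" by (simp add: add_eq_0_iff2)
  have m1: "m = 1"
  proof (rule ccontr)
    assume "m \<noteq> 1"
    hence m2: "m - 1 \<ge> 1" using m by simp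
    have "int2 ((\<mu> - 1)/b)" unfolding \<mu>_def by (rule G)
    hence "int2 (- ((\<mu> - 1)/b))" by (rule int2_neg)
    moreover have "- ((\<mu> - 1)/b) = 1 / 2^(m-1)" unfolding mum1 b_def using bb by (simp add: field_simps)
    ultimately have "int2 (1 / 2^(m-1))" by metis
    thus False using int2_inv_pow2[OF m2] by simp
  qed
  have b2: "b = 2" unfolding b_def m1 by simp
  have "t1 = 0"
  proof (rule ccontr)
    assume "t1 \<noteq> 0"
    then obtain t2 where t2: "t1 = Suc t2" by (cases t1) auto
    define \<nu> where "\<nu> = \<eta>^(2^t2)"
    have nu2: "\<nu>^2 = -1" unfolding \<nu>_def using mum1 t2 unfolding \<mu>_def
      by (simp add: power_mult[symmetric] mult.commute)
    define X where "X = (\<nu> - 1)/2"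
    have iX: "int2 X" unfolding X_def \<nu>_def using G[of "2^t2"] b2 by simp
    have sq: "\<nu> * \<nu> = -1" using nu2 by (simp add: power2_eq_square)
    have "X^2 * \<nu> = 1/2"
    proof -
      have "X^2 * \<nu> = ((\<nu> - 1) * (\<nu> - 1) * \<nu>) / 4" unfolding X_def by (simp add: power2_eq_square)
      also have "(\<nu> - 1) * (\<nu> - 1) * \<nu> = (\<nu>*\<nu>)*\<nu> - 2*(\<nu>*\<nu>) + \<nu>" by (simp add: algebra_simps)
      also have "\<dots> = 2" unfolding sq by simp
      finally show ?thesis by simp
    qed
    moreover have "int2 (X^2 * \<nu>)"
      by (intro int2_mult int2_power iX int2_alg) (unfold \<nu>_def, rule algebraic_int_power[OF aeta])
    ultimately show False using int2_half by metis
  qed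
  hence etam1: "\<eta> = -1" using mum1 unfolding \<mu>_def by simp
  have "z * (2*z + 1) * (-2) = 2 * (1 - z^2)" using key etam1 b2 unfolding \<eta>_def by simp
  hence h: "2 * (1 - z^2) - z * (2*z + 1) * (-2) = 0" by simp
  have eqn: "2 * (z^2 + z + 1) = 2 * (1 - z^2) - z * (2*z + 1) * (-2)"
    by (simp add: algebra_simps power2_eq_square)
  have "2 * (z^2 + z + 1) = 0" unfolding eqn by (rule h)
  hence zq: "z^2 + z + 1 = 0" by (simp only: mult_eq_0_iff) simp
  have z3: "z^3 = 1"
  proof -
    have "z^3 - 1 = (z - 1) * (z^2 + z + 1)" by (simp add: power2_eq_square power3_eq_cube algebra_simps)
    thus ?thesis using zq by simp
  qed
  have "z^e = z^(e mod 3)"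
  proof -
    have "z^e = z^(3*(e div 3) + e mod 3)" by simp
    also have "\<dots> = (z^3)^(e div 3) * z^(e mod 3)" by (simp only: power_add power_mult)
    thus ?thesis using z3 by simp
  qed
  hence zem: "z^(e mod 3) = -1" using etam1 unfolding \<eta>_def by simp
  have "e mod 3 < 3" by simp
  hence "e mod 3 = 0 \<or> e mod 3 = 1 \<or> e mod 3 = 2" by auto
  thus False
  proof (elim disjE)
    assume "e mod 3 = 0" thus False using zem by simp
  next
    assume "e mod 3 = 1" thus False using zem zm1 by simp
  next
    assume "e mod 3 = 2"
    hence "z^2 = -1" using zem by simp
    hence "z = 0" using zq by simp
    thus False using z0 by simp
  qed
qed

lemma eq_inv:
  fixes z :: complex
  assumes z0: "z \<noteq> 0" and eq: "z^(2*N) * (2^m * z + (2^m - 1)) = (2^m - 1) * z + 2^m"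
  shows "(1/z)^(2*N) * (2^m * (1/z) + (2^m - 1)) = (2^m - 1) * (1/z) + 2^m"
proof -
  have "(1/z)^(2*N) * (2^m * (1/z) + (2^m - 1)) = ((2^m - 1) * z + 2^m) / (z * z^(2*N))"
    using z0 by (simp add: field_simps power_divide)
  also have "\<dots> = (z^(2*N) * (2^m * z + (2^m - 1))) / (z * z^(2*N))" by (simp only: eq)
  also have "\<dots> = (2^m * z + (2^m - 1)) / z" using z0 by simp
  also have "\<dots> = (2^m - 1) * (1/z) + 2^m" using z0 by (simp add: field_simps)
  finally show ?thesis .
qed

lemma unit_z:
  fixes z :: complex
  assumes m1: "m1 \<ge> 1" and m12: "m1 < m2" and N1: "N1 \<ge> 1" and N2: "N2 \<ge> 1"
    and z1: "z \<noteq> 1" and zm1: "z \<noteq> -1"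
    and eq1: "z^(2*N1) * (2^m1 * z + (2^m1 - 1)) = (2^m1 - 1) * z + 2^m1"
    and eq2: "z^(2*N2) * (2^m2 * z + (2^m2 - 1)) = (2^m2 - 1) * z + 2^m2"
  shows "int2 z \<and> int2 (1/(1+z))"
proof -
  define \<rho> where "\<rho> = -1/(1+z)"
  have m2: "m2 \<ge> 1" using m1 m12 by simp
  obtain q1 Y1 where c1: "algebraic_int \<rho>" "odd q1" "algebraic_int Y1" "2^m1 + \<rho> * (of_int q1 + \<rho> * Y1) = 0"
    using core[OF m1 N1 z1 zm1 eq1] unfolding \<rho>_def by blast
  obtain q2 Y2 where c2: "odd q2" "algebraic_int Y2" "2^m2 + \<rho> * (of_int q2 + \<rho> * Y2) = 0"
    using core[OF m2 N2 z1 zm1 eq2] unfolding \<rho>_def by blast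
  have w0: "1 + z \<noteq> 0" using zm1 by (metis add.commute add_eq_0_iff)
  have r0: "\<rho> \<noteq> 0" unfolding \<rho>_def using w0 by simp
  define d where "d = m2 - m1"
  have d1: "d \<ge> 1" unfolding d_def using m12 by simp
  have pw: "(2::complex)^m2 = 2^d * 2^m1" unfolding d_def using m12 by (simp add: power_add[symmetric])
  have "\<rho> * (of_int q2 + \<rho> * Y2) = 2^d * (\<rho> * (of_int q1 + \<rho> * Y1))"
  proof -
    have "\<rho> * (of_int q2 + \<rho> * Y2) = - (2^m2)" using c2(3) by (simp only: add_eq_0_iff)
    also have "\<dots> = 2^d * (- (2^m1))" using pw by simp
    also have "- (2^m1) = \<rho> * (of_int q1 + \<rho> * Y1)" using c1(4) by (simp only: add_eq_0_iff)
    finally show ?thesis .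
  qed
  hence "\<rho> * (of_int q2 + \<rho> * Y2) = \<rho> * (2^d * (of_int q1 + \<rho> * Y1))" by (simp only: mult_ac)
  hence "of_int q2 + \<rho> * Y2 = 2^d * (of_int q1 + \<rho> * Y1)" using r0 mult_left_cancel by blast
  hence "of_int (q2 - 2^d * q1) = \<rho> * (2^d * Y1 - Y2)" by (simp add: algebra_simps)
  hence "of_int (q2 - 2^d * q1) * (1/\<rho>) = 2^d * Y1 - Y2" using r0 by (simp add: field_simps)
  moreover have "algebraic_int (2^d * Y1 - Y2)"
    by (intro algebraic_int_diff algebraic_int_mult c1 c2 algebraic_int_power algebraic_int_numeral)
  moreover have "odd (q2 - 2^d * q1)" using c2(1) d1 by simp
  ultimately have "int2 (1/\<rho>)" unfolding int2_def by metis
  hence "int2 (- (1/\<rho>) - 1)" by (intro int2_diff int2_neg int2_of_int[of 1, simplified])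
  moreover have "- (1/\<rho>) - 1 = z" unfolding \<rho>_def using w0 by (simp add: field_simps)
  moreover have "int2 (- \<rho>)" by (intro int2_neg int2_alg c1)
  moreover have "- \<rho> = 1/(1+z)" unfolding \<rho>_def by simp
  ultimately show ?thesis by metis
qed

definition C1 :: "complex \<Rightarrow> bool" where "C1 x \<longleftrightarrow> int2 ((x - 1)/2)"

lemma C1_int2: "C1 x \<Longrightarrow> int2 x"
proof -
  assume "C1 x"
  hence "int2 (1 + 2 * ((x - 1)/2))" unfolding C1_def
    by (intro int2_add int2_mult int2_of_int[of 1, simplified] int2_of_int[of 2, simplified])
  moreover have "1 + 2 * ((x - 1)/2) = x" by (simp add: field_simps)
  ultimately show ?thesis by metis
qed

lemma C1_mult: assumes "C1 x" "C1 y" shows "C1 (x * y)"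
proof -
  have "(x * y - 1)/2 = x * ((y - 1)/2) + (x - 1)/2" by (simp add: field_simps)
  moreover have "int2 (x * ((y - 1)/2) + (x - 1)/2)"
    using assms C1_int2[OF assms(1)] unfolding C1_def by (intro int2_add int2_mult)
  ultimately show ?thesis unfolding C1_def by metis
qed

lemma C1_pow: assumes "C1 x" shows "C1 (x ^ k)"
proof (induction k)
  case 0 thus ?case unfolding C1_def using int2_of_int[of 0] by simp
next
  case (Suc k) thus ?case using C1_mult[OF assms Suc] by simp
qed

lemma inter:
  fixes z :: complex
  assumes m1: "m1 \<ge> 1" and m12: "m1 < m2" and N1: "N1 \<ge> 1" and N2: "N2 \<ge> 1"
    and z1: "z \<noteq> 1" and zm1: "z \<noteq> -1" and z0: "z \<noteq> 0"
    and eq1: "z^(2*N1) * (2^m1 * z + (2^m1 - 1)) = (2^m1 - 1) * z + 2^m1"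
    and eq2: "z^(2*N2) * (2^m2 * z + (2^m2 - 1)) = (2^m2 - 1) * z + 2^m2"
  shows False
proof -
  have m2: "m2 \<ge> 1" using m1 m12 by simp
  have w0: "1 + z \<noteq> 0" using zm1 by (metis add.commute add_eq_0_iff)
  have u0: "1 - z \<noteq> 0" using z1 by simp
  have U: "int2 z" "int2 (1/(1+z))" using unit_z[OF m1 m12 N1 N2 z1 zm1 eq1 eq2] by auto
  have zz: "z = 1 / (1/z)" by simp
  have iz1: "1/z \<noteq> 1" "1/z \<noteq> -1"
  proof -
    show "1/z \<noteq> 1" using z1 zz by force
    show "1/z \<noteq> -1"
    proof
      assume "1/z = -1"
      hence "z = 1/(-1)" using zz by metis
      thus False using zm1 by simp
    qed
  qed
  have "int2 (1/z)" using unit_z[OF m1 m12 N1 N2 iz1 eq_inv[OF z0 eq1] eq_inv[OF z0 eq2]] by auto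
  note U = U this
  have h: "of_int (-1) + 2 * (1/(1+z)) \<noteq> 0 \<and> int2 (1 / (of_int (-1) + 2 * (1/(1+z))))"
    by (rule int2_inv_odd[OF U(2)]) simp
  have eqv: "1/(1-z) = (1/(1+z)) * (1 / (of_int (-1) + 2 * (1/(1+z))))"
    using w0 u0 h by (simp add: field_simps)
  have i1mz: "int2 (1/(1-z))" unfolding eqv by (rule int2_mult[OF U(2)]) (use h in blast)
  have gen: "\<exists>E. int2 E \<and> int2 (1/E) \<and> E \<noteq> 0 \<and> z^(2*N-1) - 1 = 2^m * E"
    if m: "m \<ge> 1" and N: "N \<ge> 1" and eq: "z^(2*N) * (2^m * z + (2^m - 1)) = (2^m - 1) * z + 2^m" for m N
  proof -
    define b :: complex where "b = 2^m"
    have key: "z * (b*z + (b-1)) * (z^(2*N-1) - 1) = b * (1 - z^2)"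
      using keyeq[OF N eq] unfolding b_def .
    have "m = Suc (m-1)" using m by simp
    hence bb: "(2::complex)^m = 2 * 2^(m-1)" by (metis power_Suc)
    have Aeq: "of_int (2^m - 1) + 2 * (of_int (2^(m-1)) * z) = b*z + (b-1)"
      unfolding b_def using bb by (simp add: algebra_simps)
    have oa: "odd ((2::int)^m - 1)" using m by simp
    have i2g: "int2 (of_int (2^(m-1)) * z)" by (rule int2_mult[OF int2_of_int U(1)])
    from int2_inv_odd[OF i2g oa] have A0: "b*z + (b-1) \<noteq> 0" and iA: "int2 (1/(b*z + (b-1)))"
      unfolding Aeq by auto
    define E where "E = (1 - z^2) * (1/z) * (1/(b*z + (b-1)))"
    have iE: "int2 E" unfolding E_def
      by (intro int2_mult iA U(3) int2_diff int2_of_int[of 1, simplified] int2_power U(1))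
    have sq: "1 - z^2 = (1 - z) * (1 + z)" by (simp add: power2_eq_square algebra_simps)
    have E0: "E \<noteq> 0" unfolding E_def sq using w0 u0 z0 A0 by simp
    have "1/E = z * (b*z + (b-1)) * (1/(1-z)) * (1/(1+z))" unfolding E_def sq using w0 u0 z0 A0
      by (simp add: field_simps)
    moreover have "int2 (z * (b*z + (b-1)) * (1/(1-z)) * (1/(1+z)))"
      unfolding Aeq[symmetric]
      by (intro int2_mult int2_add int2_of_int U i1mz i2g int2_of_int[of 2, simplified])
    ultimately have iiE: "int2 (1/E)" by simp
    have nz: "z * (b*z + (b-1)) \<noteq> 0" using z0 A0 by simp
    have "(z^(2*N-1) - 1) * (z * (b*z + (b-1))) = b * (1 - z^2)" using key by (simp only: mult_ac)
    hence "z^(2*N-1) - 1 = b * (1 - z^2) / (z * (b*z + (b-1)))" using nz by (simp add: eq_divide_eq)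
    hence "z^(2*N-1) - 1 = b * E" unfolding E_def by simp
    thus ?thesis using iE iiE E0 unfolding b_def by blast
  qed
  obtain E1 where E1: "int2 E1" "int2 (1/E1)" "E1 \<noteq> 0" "z^(2*N1-1) - 1 = 2^m1 * E1"
    using gen[OF m1 N1 eq1] by blast
  obtain E2 where E2: "int2 E2" "int2 (1/E2)" "E2 \<noteq> 0" "z^(2*N2-1) - 1 = 2^m2 * E2"
    using gen[OF m2 N2 eq2] by blast
  define e1 where "e1 = 2*N1 - 1"
  define e2 where "e2 = 2*N2 - 1"
  have oe: "odd e1" "odd e2" unfolding e1_def e2_def using N1 N2 by auto
  have Cz: "C1 (z^e1)" "C1 (z^e2)"
  proof -
    have "m1 = Suc (m1-1)" "m2 = Suc (m2 - 1)" using m1 m2 by auto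
    hence "(2::complex)^m1 = 2 * 2^(m1-1)" "(2::complex)^m2 = 2 * 2^(m2-1)" by (metis power_Suc)+
    hence "(z^e1 - 1)/2 = 2^(m1-1) * E1" "(z^e2 - 1)/2 = 2^(m2-1) * E2"
      using E1(4) E2(4) unfolding e1_def e2_def by simp_all
    thus "C1 (z^e1)" "C1 (z^e2)" unfolding C1_def
      using int2_mult[OF int2_of_int[of "2^(m1-1)"] E1(1)] int2_mult[OF int2_of_int[of "2^(m2-1)"] E2(1)]
      by simp_all
  qed
  define g where "g = gcd e1 e2"
  have e10: "e1 \<noteq> 0" using oe(1) by (intro notI) simp
  obtain u w where uw: "e1 * u = e2 * w + g" using bezout_nat[OF e10, of e2] unfolding g_def by blast
  define X where "X = z^g"
  have iX: "int2 X" unfolding X_def by (rule int2_power[OF U(1)])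
  have CX: "C1 X"
  proof -
    have ca: "C1 (z^(e1*u))" using C1_pow[OF Cz(1), of u] by (simp add: power_mult)
    have cb: "C1 (z^(e2*w))" using C1_pow[OF Cz(2), of w] by (simp add: power_mult)
    define \<alpha> where "\<alpha> = (z^(e1*u) - 1)/2"
    define \<beta> where "\<beta> = (z^(e2*w) - 1)/2"
    have "z^(e1*u) = z^(e2*w) * X" unfolding X_def uw by (simp add: power_add)
    hence "(X - 1)/2 = \<alpha> - X * \<beta>" unfolding \<alpha>_def \<beta>_def by (simp add: field_simps)
    moreover have "int2 (\<alpha> - X * \<beta>)" using ca cb iX unfolding C1_def \<alpha>_def \<beta>_def
      by (intro int2_diff int2_mult)
    ultimately show ?thesis unfolding C1_def by metis
  qed
  have Sfacts: "\<exists>S. int2 S \<and> int2 (1/S) \<and> S \<noteq> 0 \<and> z^e - 1 = (X - 1) * S"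
    if oe': "odd e" and ge: "g dvd e" for e
  proof -
    define k where "k = e div g"
    have ek: "e = g * k" unfolding k_def using ge by simp
    have ok: "odd k" using oe' ek by simp
    define S where "S = (\<Sum>j<k. X^j)"
    have "X^k - 1 = (X - 1) * S" unfolding S_def by (rule power_diff_1_eq)
    moreover have "X^k = z^e" unfolding X_def ek by (simp add: power_mult)
    ultimately have eqS: "z^e - 1 = (X - 1) * S" by simp
    have sdiv: "(\<Sum>j<k. (X^j - 1)/2) = (S - of_nat k)/2"
      unfolding S_def by (simp add: sum_subtractf sum_divide_distrib[symmetric])
    have "S = of_int (int k) + 2 * (\<Sum>j<k. (X^j - 1)/2)" unfolding sdiv by (simp add: field_simps)
    moreover have "int2 (\<Sum>j<k. (X^j - 1)/2)"
      by (rule int2_sum) (use C1_pow[OF CX] in \<open>simp add: C1_def\<close>)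
    ultimately have "S \<noteq> 0 \<and> int2 (1/S)" using int2_inv_odd[of _ "int k"] ok by simp
    moreover have "int2 S" unfolding S_def by (rule int2_sum) (rule int2_power[OF iX])
    ultimately show ?thesis using eqS by blast
  qed
  obtain S1 where S1: "int2 S1" "int2 (1/S1)" "S1 \<noteq> 0" "z^e1 - 1 = (X - 1) * S1"
    using Sfacts[OF oe(1)] unfolding g_def by auto
  obtain S2 where S2: "int2 S2" "int2 (1/S2)" "S2 \<noteq> 0" "z^e2 - 1 = (X - 1) * S2"
    using Sfacts[OF oe(2)] unfolding g_def by auto
  define d where "d = m2 - m1"
  have d1: "d \<ge> 1" unfolding d_def using m12 by simp
  have pw: "(2::complex)^m2 = 2^d * 2^m1" unfolding d_def using m12 by (simp add: power_add[symmetric])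
  have "2^m1 * E1 * S2 = 2^m2 * E2 * S1"
  proof -
    have "2^m1 * E1 * S2 = (X - 1) * S1 * S2" using E1(4) S1(4) unfolding e1_def by simp
    also have "\<dots> = (X - 1) * S2 * S1" by (simp only: mult_ac)
    also have "\<dots> = 2^m2 * E2 * S1" using E2(4) S2(4) unfolding e2_def by simp
    finally show ?thesis .
  qed
  hence "E1 * S2 = 2^d * (E2 * S1)" unfolding pw by (simp add: algebra_simps)
  hence "1 / 2^d = E2 * S1 * (1/E1) * (1/S2)" using E1(3) S2(3) E2(3) S1(3) by (simp add: field_simps)
  moreover have "int2 (E2 * S1 * (1/E1) * (1/S2))" by (intro int2_mult E1 E2 S1 S2)
  ultimately show False using int2_inv_pow2[OF d1] by simp
qed



lemma sol_eq:
  assumes "k \<in> Ssol m N"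
  shows "cis k \<noteq> 1 \<and> cis k \<noteq> -1 \<and> cis k \<noteq> 0 \<and> 2^m * cis k + (2^m - 1) \<noteq> 0 \<and>
    (cis k)^(2*N) * (2^m * cis k + (2^m - 1)) = (2^m - 1) * cis k + 2^m"
proof -
  have k0: "0 < k" and kpi: "k < pi" and cN: "cos (real N * k) \<noteq> 0"
    and te: "- (1 / (2 ^ (m + 1) - 1)) * tan (k / 2) = tan (real N * k)"
    using assms unfolding Ssol_def by auto
  define c :: real where "c = 2 ^ (m + 1) - 1"
  have c0: "c > 0" unfolding c_def using one_less_power[of "2::real" "m+1"] by simp
  define S where "S = sin (k/2)"
  define C where "C = cos (k/2)"
  define S' where "S' = sin (real N * k)"
  define C' where "C' = cos (real N * k)"
  have C0: "C > 0" unfolding C_def using k0 kpi by (intro cos_gt_zero_pi) auto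
  have C'0: "C' \<noteq> 0" unfolding C'_def using cN .
  have "- (1/c) * (S / C) = S' / C'" using te unfolding c_def S_def C_def S'_def C'_def tan_def .
  hence trig: "c * S' * C + S * C' = 0" using C0 C'0 c0 by (simp add: field_simps)
  define w where "w = cis (k/2)"
  define W where "W = cis (real N * k)"
  define z where "z = cis k"
  have wd: "w = of_real C + \<i> * of_real S" unfolding w_def C_def S_def by (simp add: complex_eq_iff)
  have Wd: "W = of_real C' + \<i> * of_real S'" unfolding W_def C'_def S'_def by (simp add: complex_eq_iff)
  have zw: "z = w^2" unfolding z_def w_def by (simp add: DeMoivre)
  have zW: "z^(2*N) = W^2" unfolding z_def W_def by (simp add: DeMoivre mult.commute mult.left_commute)
  have pyth: "(of_real C :: complex)^2 + (of_real S)^2 = 1"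
    unfolding C_def S_def by (metis of_real_add of_real_power of_real_1 sin_cos_squared_add2)
  have pyth': "(of_real C' :: complex)^2 + (of_real S')^2 = 1"
    unfolding C'_def S'_def by (metis of_real_add of_real_power of_real_1 sin_cos_squared_add2)
  have sq1: "(a + \<i> * b)^2 - 1 = 2 * \<i> * b * (a + \<i> * b)" if "a^2 + b^2 = 1" for a b :: complex
  proof -
    have "(a + \<i> * b)^2 - 1 - 2 * \<i> * b * (a + \<i> * b) = a^2 + b^2 - 1"
      by (simp add: power2_eq_square algebra_simps)
    thus ?thesis using that by simp
  qed
  have sq2: "(a + \<i> * b)^2 + 1 = 2 * a * (a + \<i> * b)" if "a^2 + b^2 = 1" for a b :: complex
  proof -
    have "(a + \<i> * b)^2 + 1 - 2 * a * (a + \<i> * b) = 1 - a^2 - b^2"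
      by (simp add: power2_eq_square algebra_simps)
    thus ?thesis using that by (simp add: algebra_simps)
  qed
  have h1: "z - 1 = 2 * \<i> * of_real S * w" unfolding zw wd using sq1[OF pyth] .
  have h2: "z + 1 = 2 * of_real C * w" unfolding zw wd using sq2[OF pyth] .
  have h3: "z^(2*N) - 1 = 2 * \<i> * of_real S' * W" unfolding zW Wd using sq1[OF pyth'] .
  have h4: "z^(2*N) + 1 = 2 * of_real C' * W" unfolding zW Wd using sq2[OF pyth'] .
  define b :: complex where "b = 2^m"
  have cb: "(of_real c :: complex) = 2 * b - 1" unfolding c_def b_def by simp
  have T0: "of_real c * (z^(2*N) - 1) * (z + 1) + (z - 1) * (z^(2*N) + 1) = 0"
  proof -
    have "of_real c * (z^(2*N) - 1) * (z + 1) + (z - 1) * (z^(2*N) + 1)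
        = 4 * \<i> * w * W * of_real (c * S' * C + S * C')"
      unfolding h1 h2 h3 h4 by (simp add: algebra_simps)
    thus ?thesis using trig by simp
  qed
  have "2 * (z^(2*N) * (b * z + (b - 1)) - ((b - 1) * z + b)) =
        of_real c * (z^(2*N) - 1) * (z + 1) + (z - 1) * (z^(2*N) + 1)"
    unfolding cb by (simp add: algebra_simps)
  hence "2 * (z^(2*N) * (b * z + (b - 1)) - ((b - 1) * z + b)) = 0" using T0 by (simp only:)
  hence "z^(2*N) * (b * z + (b - 1)) - ((b - 1) * z + b) = 0" by (simp only: mult_eq_0_iff) simp
  hence eq: "z^(2*N) * (b * z + (b - 1)) = (b - 1) * z + b" by (simp only: right_minus_eq)
  have Im: "Im z > 0" unfolding z_def using k0 kpi by (simp add: sin_gt_zero)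
  have "Im (b * z + (b - 1)) = 2^m * Im z" unfolding b_def by simp
  hence "Im (b * z + (b - 1)) > 0" using Im by simp
  hence nz: "b * z + (b - 1) \<noteq> 0" by (metis zero_complex.sel(2) less_irrefl)
  have "z \<noteq> 1" "z \<noteq> -1" "z \<noteq> 0" using Im by auto
  thus ?thesis using eq nz unfolding z_def b_def by auto
qed

lemma rat_root:
  assumes "k \<in> piRat"
  shows "\<exists>n. n \<ge> 1 \<and> (cis k)^n = 1"
proof -
  obtain q where q: "k = pi * of_rat q" using assms unfolding piRat_def by auto
  obtain p r where pr: "quotient_of q = (p, r)" by (cases "quotient_of q")
  have r0: "r > 0" using quotient_of_denom_pos[OF pr] .
  have qd: "q = of_int p / of_int r" using quotient_of_div[OF pr] .
  define n where "n = 2 * nat r"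
  have n1: "n \<ge> 1" unfolding n_def using r0 by simp
  have "real n * k = (2 * pi) * of_int p"
    unfolding n_def q qd using r0 by (simp add: of_rat_divide field_simps)
  hence "(cis k)^n = cis ((2 * pi) * of_int p)" by (simp add: DeMoivre)
  also have "\<dots> = 1" by (simp add: complex_eq_iff)
  finally show ?thesis using n1 by blast
qed

theorem lemma11:
  shows "(\<forall>m1 m2. m1 \<ge> 1 \<longrightarrow> m2 \<ge> 1 \<longrightarrow> m1 \<noteq> m2 \<longrightarrow>
            Sall m1 \<inter> Sall m2 = {} \<and> Sall m1 \<inter> piRat = {} \<and> Sall m2 \<inter> piRat = {})
       \<and> (\<forall>m N1 N2. m \<ge> 1 \<longrightarrow> N1 \<ge> 1 \<longrightarrow> N2 \<ge> 1 \<longrightarrow> N1 \<noteq> N2 \<longrightarrow>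
            Ssol m N1 \<inter> Ssol m N2 = {})"
proof -
  have norat: "Sall m \<inter> piRat = {}" if m: "m \<ge> 1" for m
  proof (rule ccontr)
    assume "Sall m \<inter> piRat \<noteq> {}"
    then obtain k N where kN: "N \<ge> 1" "k \<in> Ssol m N" "k \<in> piRat" unfolding Sall_def by auto
    obtain n where n: "n \<ge> 1" "(cis k)^n = 1" using rat_root[OF kN(3)] by blast
    have s: "cis k \<noteq> 1" "cis k \<noteq> -1"
      "(cis k)^(2*N) * (2^m * cis k + (2^m - 1)) = (2^m - 1) * cis k + 2^m"
      using sol_eq[OF kN(2)] by auto
    show False by (rule rou[OF m kN(1) s(1) s(2) n s(3)])
  qed
  have nointer: "Sall m1 \<inter> Sall m2 = {}" if m1: "m1 \<ge> 1" and m12: "m1 < m2" for m1 m2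
  proof (rule ccontr)
    assume "Sall m1 \<inter> Sall m2 \<noteq> {}"
    then obtain k N1 N2 where kN: "N1 \<ge> 1" "k \<in> Ssol m1 N1" "N2 \<ge> 1" "k \<in> Ssol m2 N2"
      unfolding Sall_def by auto
    have s1: "cis k \<noteq> 1" "cis k \<noteq> -1" "cis k \<noteq> 0"
      "(cis k)^(2*N1) * (2^m1 * cis k + (2^m1 - 1)) = (2^m1 - 1) * cis k + 2^m1"
      using sol_eq[OF kN(2)] by auto
    have s2: "(cis k)^(2*N2) * (2^m2 * cis k + (2^m2 - 1)) = (2^m2 - 1) * cis k + 2^m2"
      using sol_eq[OF kN(4)] by auto
    show False by (rule inter[OF m1 m12 kN(1) kN(3) s1 s2])
  qed
  have part1: "Sall m1 \<inter> Sall m2 = {} \<and> Sall m1 \<inter> piRat = {} \<and> Sall m2 \<inter> piRat = {}"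
    if "m1 \<ge> 1" "m2 \<ge> 1" "m1 \<noteq> m2" for m1 m2
  proof -
    have "Sall m1 \<inter> Sall m2 = {}"
    proof (cases "m1 < m2")
      case True thus ?thesis using nointer[OF that(1)] by blast
    next
      case False
      hence "m2 < m1" using that(3) by simp
      thus ?thesis using nointer[OF that(2)] by blast
    qed
    thus ?thesis using norat that by blast
  qed
  have nodup: "Ssol m N1 \<inter> Ssol m N2 = {}" if m: "m \<ge> 1" and N: "N2 \<ge> 1" and N12: "N2 < N1" for m N1 N2
  proof (rule ccontr)
    assume "Ssol m N1 \<inter> Ssol m N2 \<noteq> {}"
    then obtain k where k: "k \<in> Ssol m N1" "k \<in> Ssol m N2" by auto
    define z where "z = cis k"
    have s1: "z \<noteq> 1" "z \<noteq> -1" "z \<noteq> 0" "2^m * z + (2^m - 1) \<noteq> 0"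
      "z^(2*N1) * (2^m * z + (2^m - 1)) = (2^m - 1) * z + 2^m"
      using sol_eq[OF k(1)] unfolding z_def by auto
    have s2: "z^(2*N2) * (2^m * z + (2^m - 1)) = (2^m - 1) * z + 2^m"
      using sol_eq[OF k(2)] unfolding z_def by auto
    have "z^(2*N1) * (2^m * z + (2^m - 1)) = z^(2*N2) * (2^m * z + (2^m - 1))" using s1(5) s2 by simp
    hence "z^(2*N1) = z^(2*N2)" using s1(4) by simp
    moreover have "z^(2*N1) = z^(2*N2) * z^(2*(N1-N2))"
    proof -
      have e: "2*N1 = 2*N2 + 2*(N1-N2)" using N12 by simp
      show ?thesis by (subst e) (rule power_add)
    qed
    ultimately have zn: "z^(2*(N1-N2)) = 1" using s1(3) by simp
    have N1: "N1 \<ge> 1" using N N12 by simp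
    have n: "2*(N1-N2) \<ge> 1" using N12 by simp
    show False by (rule rou[OF m N1 s1(1) s1(2) n zn s1(5)])
  qed
  have part2: "Ssol m N1 \<inter> Ssol m N2 = {}"
    if "m \<ge> 1" "N1 \<ge> 1" "N2 \<ge> 1" "N1 \<noteq> N2" for m N1 N2
  proof (cases "N2 < N1")
    case True thus ?thesis using nodup[OF that(1) that(3)] by blast
  next
    case False
    hence "N1 < N2" using that(4) by simp
    thus ?thesis using nodup[OF that(1) that(2)] by blast
  qed
  show ?thesis using part1 part2 by blast
qed

end
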